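(* If $\rho_{AB}$ is supported on the symmetric subspace or on the antisymmetric subspace of $\mathcal H_A\otimes\mathcal H_B$ (with $\mathcal H_A\cong\mathcal H_B$), then $\Upsilon(A:B)=0$. In particular, $\Upsilon(A:B)=0$ for every pure state $\rho_{AB}=\ket\phi\bra\phi_{AB}$.
   Context: Let $\rho_{AB}$ be a finite-dimensional bipartite state shared by Alice ($A$) and Bob ($B$), with $A$ and $B$ of the same dimension so that they can be swapped. Let $\ket{\psi}_{ABR}$ be a purification, i.e. ${\rm Tr}_R\ket\psi\bra\psi_{ABR}=\rho_{AB}$, where $R$ is an inaccessible reference system. Let $\psi_{BAR}$ denote the state obtained from $\psi_{ABR}$ by applying the swap of $A$ and $B$. A state exchange protocol on $n$ copies is an LOCC operation between Alice and Bob, acting on $\psi_{ABR}^{\otimes n}$ (with $R$ untouched) together with a supply of maximally entangled qubit pairs (ebits) shared between Alice and Bob, producing a state $\rho^{ex}_{ABR}$. It is faithful if $F(\rho^{ex}_{ABR},\psi_{BAR}^{\otimes n})\to1$ as $n\to\infty$, where $F(\rho,\sigma)={\rm Tr}\sqrt{\sqrt\sigma\rho\sqrt\sigma}$. The uncommon information $\Upsilon(A:B)$ is the infimum of rates $r$ (ebits consumed per copy, asymptotically) for which faithful state exchange protocols exist, classical communication being free. For a pure state $\ket\phi_{AB}$, the symmetric/antisymmetric subspace is taken with respect to a suitable local identification of $\mathcal H_A$ and $\mathcal H_B$ (e.g. via the Schmidt bases). *)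

theory Defs
  imports "HOL-Analysis.Analysis"
begin

(* A vector on a system with (finite) basis C is a function  'i => complex  vanishing
   outside C; an operator is a matrix  'i => 'i => complex  vanishing outside C x C. *)

definition is_vec :: "'i set \<Rightarrow> ('i \<Rightarrow> complex) \<Rightarrow> bool" where
  "is_vec C v \<longleftrightarrow> (\<forall>x. x \<notin> C \<longrightarrow> v x = 0)"

definition is_op :: "'i set \<Rightarrow> ('i \<Rightarrow> 'i \<Rightarrow> complex) \<Rightarrow> bool" where
  "is_op C A \<longleftrightarrow> (\<forall>x y. x \<notin> C \<or> y \<notin> C \<longrightarrow> A x y = 0)"

definition op_mult :: "'i set \<Rightarrow> ('i \<Rightarrow> 'i \<Rightarrow> complex) \<Rightarrow> ('i \<Rightarrow> 'i \<Rightarrow> complex) \<Rightarrow> ('i \<Rightarrow> 'i \<Rightarrow> complex)" where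
  "op_mult C A B = (\<lambda>x y. \<Sum>z\<in>C. A x z * B z y)"

definition op_apply :: "'i set \<Rightarrow> ('i \<Rightarrow> 'i \<Rightarrow> complex) \<Rightarrow> ('i \<Rightarrow> complex) \<Rightarrow> ('i \<Rightarrow> complex)" where
  "op_apply C A v = (\<lambda>x. \<Sum>y\<in>C. A x y * v y)"

definition op_trace :: "'i set \<Rightarrow> ('i \<Rightarrow> 'i \<Rightarrow> complex) \<Rightarrow> complex" where
  "op_trace C A = (\<Sum>x\<in>C. A x x)"

definition adj :: "('i \<Rightarrow> 'i \<Rightarrow> complex) \<Rightarrow> ('i \<Rightarrow> 'i \<Rightarrow> complex)" where
  "adj A = (\<lambda>x y. cnj (A y x))"

definition id_op :: "'i set \<Rightarrow> ('i \<Rightarrow> 'i \<Rightarrow> complex)" where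
  "id_op C = (\<lambda>x y. if x \<in> C \<and> x = y then 1 else 0)"

definition qform :: "'i set \<Rightarrow> ('i \<Rightarrow> 'i \<Rightarrow> complex) \<Rightarrow> ('i \<Rightarrow> complex) \<Rightarrow> complex" where
  "qform C A v = (\<Sum>x\<in>C. \<Sum>y\<in>C. cnj (v x) * A x y * v y)"

text \<open>Positive semidefinite operator on carrier C (over the complex numbers this implies Hermitian).\<close>
definition psd :: "'i set \<Rightarrow> ('i \<Rightarrow> 'i \<Rightarrow> complex) \<Rightarrow> bool" where
  "psd C A \<longleftrightarrow> is_op C A \<and> (\<forall>v. qform C A v \<in> \<real> \<and> 0 \<le> Re (qform C A v))"

definition density_op :: "'i set \<Rightarrow> ('i \<Rightarrow> 'i \<Rightarrow> complex) \<Rightarrow> bool" where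
  "density_op C \<rho> \<longleftrightarrow> psd C \<rho> \<and> op_trace C \<rho> = 1"

definition unit_vec :: "'i set \<Rightarrow> ('i \<Rightarrow> complex) \<Rightarrow> bool" where
  "unit_vec C v \<longleftrightarrow> is_vec C v \<and> (\<Sum>x\<in>C. (cmod (v x))\<^sup>2) = 1"

definition outer :: "('i \<Rightarrow> complex) \<Rightarrow> ('i \<Rightarrow> 'i \<Rightarrow> complex)" where
  "outer v = (\<lambda>x y. v x * cnj (v y))"

definition unitary_op :: "'i set \<Rightarrow> ('i \<Rightarrow> 'i \<Rightarrow> complex) \<Rightarrow> bool" where
  "unitary_op C U \<longleftrightarrow> is_op C U \<and> op_mult C (adj U) U = id_op C \<and> op_mult C U (adj U) = id_op C"

definition op_sqrt :: "'i set \<Rightarrow> ('i \<Rightarrow> 'i \<Rightarrow> complex) \<Rightarrow> ('i \<Rightarrow> 'i \<Rightarrow> complex)" where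
  "op_sqrt C A = (THE S. psd C S \<and> op_mult C S S = A)"

definition fidelity :: "'i set \<Rightarrow> ('i \<Rightarrow> 'i \<Rightarrow> complex) \<Rightarrow> ('i \<Rightarrow> 'i \<Rightarrow> complex) \<Rightarrow> real" where
  "fidelity C \<rho> \<sigma> =
     Re (op_trace C (op_sqrt C (op_mult C (op_mult C (op_sqrt C \<sigma>) \<rho>) (op_sqrt C \<sigma>))))"

definition supported_on :: "'i set \<Rightarrow> ('i \<Rightarrow> 'i \<Rightarrow> complex) \<Rightarrow> (('i \<Rightarrow> complex) \<Rightarrow> bool) \<Rightarrow> bool" where
  "supported_on C \<rho> P \<longleftrightarrow> (\<forall>v. is_vec C v \<longrightarrow> P (op_apply C \<rho> v))"

definition AB :: "nat \<Rightarrow> (nat \<times> nat) set" where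
  "AB d = {0..<d} \<times> {0..<d}"

definition ABR :: "nat \<Rightarrow> nat \<Rightarrow> (nat \<times> nat \<times> nat) set" where
  "ABR d dR = {0..<d} \<times> {0..<d} \<times> {0..<dR}"

text \<open>Swap of A and B relative to the identification  W : H_A -> H_B  (a unitary d x d matrix,
  W y a = <y|W|a>):  S_W |a>|b> = W^dagger|b> (x) W|a>.  For W = identity this is the usual swap.\<close>
definition swap_op :: "nat \<Rightarrow> (nat \<Rightarrow> nat \<Rightarrow> complex) \<Rightarrow> (nat \<times> nat) \<Rightarrow> (nat \<times> nat) \<Rightarrow> complex" where
  "swap_op d W = (\<lambda>(x, y) (a, b).
      if (x, y) \<in> AB d \<and> (a, b) \<in> AB d then cnj (W b x) * W y a else 0)"

definition symmetric_sub :: "nat \<Rightarrow> (nat \<Rightarrow> nat \<Rightarrow> complex) \<Rightarrow> ((nat \<times> nat) \<Rightarrow> complex) \<Rightarrow> bool" where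
  "symmetric_sub d W v \<longleftrightarrow> op_apply (AB d) (swap_op d W) v = v"

definition antisymmetric_sub :: "nat \<Rightarrow> (nat \<Rightarrow> nat \<Rightarrow> complex) \<Rightarrow> ((nat \<times> nat) \<Rightarrow> complex) \<Rightarrow> bool" where
  "antisymmetric_sub d W v \<longleftrightarrow> op_apply (AB d) (swap_op d W) v = (\<lambda>x. - v x)"

definition ptrace_R :: "nat \<Rightarrow> (nat \<times> nat \<times> nat \<Rightarrow> complex) \<Rightarrow> (nat \<times> nat) \<Rightarrow> (nat \<times> nat) \<Rightarrow> complex" where
  "ptrace_R dR \<psi> = (\<lambda>(a, b) (a', b'). \<Sum>r<dR. \<psi> (a, b, r) * cnj (\<psi> (a', b', r)))"

definition purification :: "nat \<Rightarrow> nat \<Rightarrow> ((nat \<times> nat) \<Rightarrow> (nat \<times> nat) \<Rightarrow> complex) \<Rightarrow> (nat \<times> nat \<times> nat \<Rightarrow> complex) \<Rightarrow> bool" where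
  "purification d dR \<rho> \<psi> \<longleftrightarrow> unit_vec (ABR d dR) \<psi> \<and> ptrace_R dR \<psi> = \<rho>"

definition swapped_pure :: "nat \<Rightarrow> (nat \<Rightarrow> nat \<Rightarrow> complex) \<Rightarrow> (nat \<times> nat \<times> nat \<Rightarrow> complex) \<Rightarrow> (nat \<times> nat \<times> nat \<Rightarrow> complex)" where
  "swapped_pure d W \<psi> = (\<lambda>(x, y, r). \<Sum>a<d. \<Sum>b<d. swap_op d W (x, y) (a, b) * \<psi> (a, b, r))"

type_synonym ('a, 'b, 'r) gop = "('a \<times> 'b \<times> 'r) \<Rightarrow> ('a \<times> 'b \<times> 'r) \<Rightarrow> complex"

text \<open>Local CP map on Alice (Kraus list Ks, each K : X -> X') tensored with identity on Bob and R.\<close>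
definition apply_A :: "'a set \<Rightarrow> ('a \<Rightarrow> 'a \<Rightarrow> complex) list \<Rightarrow> ('a, 'b, 'r) gop \<Rightarrow> ('a, 'b, 'r) gop" where
  "apply_A X Ks \<rho> = (\<lambda>(x, y, r) (x', y', r').
     (\<Sum>K\<leftarrow>Ks. \<Sum>x1\<in>X. \<Sum>x2\<in>X. K x x1 * \<rho> (x1, y, r) (x2, y', r') * cnj (K x' x2)))"

definition apply_B :: "'b set \<Rightarrow> ('b \<Rightarrow> 'b \<Rightarrow> complex) list \<Rightarrow> ('a, 'b, 'r) gop \<Rightarrow> ('a, 'b, 'r) gop" where
  "apply_B Y Ks \<rho> = (\<lambda>(x, y, r) (x', y', r').
     (\<Sum>K\<leftarrow>Ks. \<Sum>y1\<in>Y. \<Sum>y2\<in>Y. K y y1 * \<rho> (x, y1, r) (x', y2, r') * cnj (K y' y2)))"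

text \<open>A quantum instrument from carrier X to carrier X': a finite list of CP maps (each a Kraus list)
  whose sum is trace preserving.\<close>
definition instrument :: "'a set \<Rightarrow> 'a set \<Rightarrow> ('a \<Rightarrow> 'a \<Rightarrow> complex) list list \<Rightarrow> bool" where
  "instrument X X' Iss \<longleftrightarrow> finite X' \<and>
     (\<forall>Ks\<in>set Iss. \<forall>K\<in>set Ks. \<forall>x x1. x \<notin> X' \<or> x1 \<notin> X \<longrightarrow> K x x1 = 0) \<and>
     (\<forall>x1\<in>X. \<forall>x2\<in>X.
        (\<Sum>Ks\<leftarrow>Iss. \<Sum>K\<leftarrow>Ks. \<Sum>x\<in>X'. cnj (K x x1) * K x x2) = (if x1 = x2 then 1 else 0))"

text \<open>locc X Y X' Y' Phi: Phi is a finite-round LOCC channel from Alice's system X and Bob's system Y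
  to Alice's X' and Bob's Y', acting trivially on the reference R.  A round: one party applies a local
  instrument, broadcasts the outcome j, and the rest of the protocol may depend on j.\<close>
inductive locc :: "'a set \<Rightarrow> 'b set \<Rightarrow> 'a set \<Rightarrow> 'b set \<Rightarrow> (('a, 'b, 'r) gop \<Rightarrow> ('a, 'b, 'r) gop) \<Rightarrow> bool" where
  locc_id: "finite X \<Longrightarrow> finite Y \<Longrightarrow> locc X Y X Y (\<lambda>\<rho>. \<rho>)"
| locc_alice: "finite X \<Longrightarrow> instrument X X'' Iss \<Longrightarrow> (\<forall>j<length Iss. locc X'' Y X' Y' (\<Phi>s j)) \<Longrightarrow>
     locc X Y X' Y' (\<lambda>\<rho> u w. \<Sum>j<length Iss. \<Phi>s j (apply_A X (Iss ! j) \<rho>) u w)"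
| locc_bob: "finite Y \<Longrightarrow> instrument Y Y'' Iss \<Longrightarrow> (\<forall>j<length Iss. locc X Y'' X' Y' (\<Phi>s j)) \<Longrightarrow>
     locc X Y X' Y' (\<lambda>\<rho> u w. \<Sum>j<length Iss. \<Phi>s j (apply_B Y (Iss ! j) \<rho>) u w)"

definition lists_of :: "nat \<Rightarrow> nat \<Rightarrow> nat list set" where
  "lists_of n m = {xs. length xs = n \<and> (\<forall>i<n. xs ! i < m)}"

text \<open>Alice's (resp. Bob's) input system: n copies of C^d followed by her halves of k ebits.\<close>
definition party_in :: "nat \<Rightarrow> nat \<Rightarrow> nat \<Rightarrow> nat list set" where
  "party_in d n k = {xs. length xs = n + k \<and> (\<forall>i<n. xs ! i < d) \<and> (\<forall>i. n \<le> i \<and> i < n + k \<longrightarrow> xs ! i < 2)}"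

text \<open>psi_ABR^{(x) n} (x) Phi^{(x) k}, Phi = (|00>+|11>)/sqrt 2 shared between Alice and Bob.\<close>
definition input_vec :: "nat \<Rightarrow> nat \<Rightarrow> (nat \<times> nat \<times> nat \<Rightarrow> complex) \<Rightarrow> nat \<Rightarrow> nat \<Rightarrow> (nat list \<times> nat list \<times> nat list \<Rightarrow> complex)" where
  "input_vec d dR \<psi> n k = (\<lambda>(xs, ys, rs).
     if xs \<in> party_in d n k \<and> ys \<in> party_in d n k \<and> rs \<in> lists_of n dR
     then (\<Prod>i<n. \<psi> (xs ! i, ys ! i, rs ! i)) *
          (\<Prod>i\<in>{n..<n+k}. if xs ! i = ys ! i then complex_of_real (1 / sqrt 2) else 0)
     else 0)"

definition target_vec :: "nat \<Rightarrow> nat \<Rightarrow> (nat \<Rightarrow> nat \<Rightarrow> complex) \<Rightarrow> (nat \<times> nat \<times> nat \<Rightarrow> complex) \<Rightarrow> nat \<Rightarrow> (nat list \<times> nat list \<times> nat list \<Rightarrow> complex)" where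
  "target_vec d dR W \<psi> n = (\<lambda>(xs, ys, rs).
     if xs \<in> lists_of n d \<and> ys \<in> lists_of n d \<and> rs \<in> lists_of n dR
     then (\<Prod>i<n. swapped_pure d W \<psi> (xs ! i, ys ! i, rs ! i))
     else 0)"

definition out_carrier :: "nat \<Rightarrow> nat \<Rightarrow> nat \<Rightarrow> (nat list \<times> nat list \<times> nat list) set" where
  "out_carrier d dR n = lists_of n d \<times> lists_of n d \<times> lists_of n dR"

definition achievable_rate :: "nat \<Rightarrow> nat \<Rightarrow> (nat \<Rightarrow> nat \<Rightarrow> complex) \<Rightarrow> (nat \<times> nat \<times> nat \<Rightarrow> complex) \<Rightarrow> real \<Rightarrow> bool" where
  "achievable_rate d dR W \<psi> r \<longleftrightarrow>
     (\<exists>(k :: nat \<Rightarrow> nat) (\<Lambda> :: nat \<Rightarrow> (nat list, nat list, nat list) gop \<Rightarrow> (nat list, nat list, nat list) gop).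
        (\<forall>n. locc (party_in d n (k n)) (party_in d n (k n)) (lists_of n d) (lists_of n d) (\<Lambda> n)) \<and>
        limsup (\<lambda>n. ereal (real (k n) / real n)) \<le> ereal r \<and>
        (\<lambda>n. fidelity (out_carrier d dR n) (\<Lambda> n (outer (input_vec d dR \<psi> n (k n))))
                      (outer (target_vec d dR W \<psi> n))) \<longlonglongrightarrow> 1)"

definition uncommon_info :: "nat \<Rightarrow> nat \<Rightarrow> (nat \<Rightarrow> nat \<Rightarrow> complex) \<Rightarrow> (nat \<times> nat \<times> nat \<Rightarrow> complex) \<Rightarrow> real" where
  "uncommon_info d dR W \<psi> = Inf {r. achievable_rate d dR W \<psi> r}"

end

theory Submission
  imports Defs Jordan_Normal_Form.Schur_Decomposition "HOL-Computational_Algebra.Fundamental_Theorem_Algebra"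
begin

no_notation Finite_Cartesian_Product.vec.vec_nth (infixl \<open>$\<close> 90)
hide_const (open) Matrix.unit_vec


lemma op_mult_assoc:
  assumes "finite C"
  shows "op_mult C (op_mult C A B) D = op_mult C A (op_mult C B D)"
  unfolding op_mult_def
  apply (rule ext)+
  apply (simp add: sum_distrib_left sum_distrib_right mult.assoc)
  apply (rule sum.swap)
  done

lemma op_apply_mult:
  shows "op_apply C (op_mult C A B) v = op_apply C A (op_apply C B v)"
  unfolding op_mult_def op_apply_def
  apply (rule ext)
  apply (simp add: sum_distrib_left sum_distrib_right mult.assoc)
  apply (rule sum.swap)
  done

lemma qform_alt: "qform C S v = (\<Sum>x\<in>C. cnj (v x) * op_apply C S v x)"
  unfolding qform_def op_apply_def by (simp add: sum_distrib_left mult.assoc)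

lemma psd_sqrt_zero:
  assumes fin: "finite C" and S: "psd C S"
    and z: "\<forall>x\<in>C. op_apply C S (op_apply C S w) x = 0"
  shows "\<forall>x\<in>C. op_apply C S w x = 0"
proof -
  define u where "u = op_apply C S w"
  define N where "N = (\<Sum>x\<in>C. (cmod (u x))\<^sup>2)"
  have Su: "\<forall>x\<in>C. op_apply C S u x = 0" using z u_def by simp
  have lin: "op_apply C S (\<lambda>x. w x + of_real t * u x) x = u x + of_real t * op_apply C S u x" for t x
    unfolding u_def op_apply_def by (simp add: algebra_simps sum.distrib sum_distrib_left)
  have qf: "qform C S (\<lambda>x. w x + of_real t * u x) = qform C S w + of_real t * of_real N" for t :: real
  proof -
    have "qform C S (\<lambda>x. w x + of_real t * u x) = (\<Sum>x\<in>C. (cnj (w x) + of_real t * cnj (u x)) * u x)"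
      unfolding qform_alt lin using Su by (intro sum.cong) auto
    also have "\<dots> = (\<Sum>x\<in>C. cnj (w x) * u x) + of_real t * (\<Sum>x\<in>C. u x * cnj (u x))"
      by (simp add: algebra_simps sum.distrib sum_distrib_left)
    also have "(\<Sum>x\<in>C. u x * cnj (u x)) = of_real N"
      unfolding N_def by (simp only: of_real_sum complex_norm_square)
    also have "(\<Sum>x\<in>C. cnj (w x) * u x) = qform C S w" unfolding qform_alt u_def ..
    finally show ?thesis .
  qed
  have ge: "0 \<le> Re (qform C S w) + t * N" for t :: real
    using S qf[of t] unfolding psd_def by (metis Re_complex_of_real mult.commute of_real_mult plus_complex.sel(1) times_complex.sel(1) Re_complex_of_real) 
  have N0: "N = 0"
  proof (rule ccontr)
    assume "N \<noteq> 0"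
    moreover have "N \<ge> 0" unfolding N_def by (simp add: sum_nonneg)
    ultimately have "N > 0" by simp
    have e: "(- (\<bar>Re (qform C S w)\<bar> + 1) / N) * N = - (\<bar>Re (qform C S w)\<bar> + 1)"
      using \<open>N > 0\<close> by simp
    from ge[of "- (\<bar>Re (qform C S w)\<bar> + 1) / N"] show False unfolding e by linarith
  qed
  have "\<forall>x\<in>C. (cmod (u x))\<^sup>2 = 0"
    using N0 unfolding N_def by (subst (asm) sum_nonneg_eq_0_iff) (auto simp: fin)
  then show ?thesis unfolding u_def by simp
qed

lemma outer_apply: "op_apply C (outer v) w = (\<lambda>x. v x * (\<Sum>y\<in>C. cnj (v y) * w y))"
  unfolding op_apply_def outer_def by (simp add: sum_distrib_left mult.assoc)

lemma sqrt_pure_unique: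
  assumes fin: "finite C" and v: "is_vec C v" and nv: "(\<Sum>x\<in>C. cnj (v x) * v x) = 1"
    and S: "psd C S" and SS: "op_mult C S S = outer v"
  shows "S = outer v"
proof -
  have opS: "is_op C S" using S unfolding psd_def by simp
  have SP: "op_mult C S (outer v) = op_mult C (outer v) S"
    using op_mult_assoc[OF fin, of S S S] unfolding SS by simp
  define l where "l = qform C S v"
  have Sv: "op_apply C S v x = l * v x" for x
  proof -
    have e: "(\<Sum>z\<in>C. S x z * (v z * cnj (v y))) = (\<Sum>z\<in>C. (v x * cnj (v z)) * S z y)" for y
      using fun_cong[OF fun_cong[OF SP, of x], of y] unfolding op_mult_def outer_def by simp
    have "(\<Sum>y\<in>C. (\<Sum>z\<in>C. S x z * (v z * cnj (v y))) * v y)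
        = (\<Sum>y\<in>C. (\<Sum>z\<in>C. (v x * cnj (v z)) * S z y) * v y)"
      using e by simp
    moreover have "(\<Sum>y\<in>C. (\<Sum>z\<in>C. S x z * (v z * cnj (v y))) * v y) = op_apply C S v x * (\<Sum>y\<in>C. cnj (v y) * v y)"
    proof -
      have "(\<Sum>z\<in>C. S x z * (v z * cnj (v y))) = op_apply C S v x * cnj (v y)" for y
        unfolding op_apply_def by (simp add: sum_distrib_right mult.assoc)
      then show ?thesis by (simp add: sum_distrib_left mult.assoc)
    qed
    moreover have "(\<Sum>y\<in>C. (\<Sum>z\<in>C. (v x * cnj (v z)) * S z y) * v y) = v x * l"
    proof -
      have "(\<Sum>y\<in>C. (\<Sum>z\<in>C. (v x * cnj (v z)) * S z y) * v y) = v x * (\<Sum>y\<in>C. \<Sum>z\<in>C. cnj (v z) * S z y * v y)"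
        by (simp add: sum_distrib_left sum_distrib_right mult.assoc)
      also have "\<dots> = v x * l" unfolding l_def qform_def by (subst sum.swap) simp
      finally show ?thesis .
    qed
    ultimately show ?thesis using nv by simp
  qed
  have lreal: "l \<in> \<real>" and lpos: "0 \<le> Re l" using S unfolding psd_def l_def by auto
  obtain x0 where x0: "x0 \<in> C" "v x0 \<noteq> 0"
    using nv by (metis (no_types, lifting) mult_zero_right sum.neutral zero_neq_one)
  have "op_apply C (op_mult C S S) v x0 = v x0"
    unfolding SS outer_apply using nv by simp
  moreover have "op_apply C (op_mult C S S) v x0 = l * l * v x0"
  proof -
    have "op_apply C S v = (\<lambda>z. l * v z)" using Sv by (intro ext) simp
    then have "op_apply C (op_mult C S S) v x0 = op_apply C S (\<lambda>z. l * v z) x0"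
      unfolding op_apply_mult by simp
    also have "\<dots> = l * op_apply C S v x0"
      unfolding op_apply_def by (simp add: sum_distrib_left algebra_simps)
    finally show ?thesis using Sv by simp
  qed
  ultimately have "l * l = 1" using x0 by simp
  moreover obtain r where r: "l = of_real r" using lreal by (auto elim: Reals_cases)
  ultimately have "r * r = 1" "r \<ge> 0" using lpos by (auto simp flip: of_real_mult)
  then have "(r - 1) * (r + 1) = 0" by (simp add: algebra_simps)
  then have "r = 1" using \<open>r \<ge> 0\<close> by simp
  then have l1: "l = 1" using r by simp
  show ?thesis
  proof (intro ext)
    fix x y
    show "S x y = outer v x y"
    proof (cases "x \<in> C \<and> y \<in> C")
      case False
      then show ?thesis using opS v unfolding is_op_def is_vec_def outer_def by auto
    next
      case True
      define w where "w = (\<lambda>z. (if z = y then 1 else 0) - cnj (v y) * v z)"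
      have dl: "(\<Sum>z\<in>C. f z * (if z = y then 1 else 0)) = f y" for f :: "'a \<Rightarrow> complex"
      proof -
        have "(\<Sum>z\<in>C. f z * (if z = y then 1 else 0)) = (\<Sum>z\<in>C. if z = y then f z else 0)"
          by (rule sum.cong) auto
        also have "\<dots> = f y" using True fin by simp
        finally show ?thesis .
      qed
      have "(\<Sum>z\<in>C. cnj (v z) * w z) = (\<Sum>z\<in>C. cnj (v z) * (if z = y then 1 else 0)) - cnj (v y) * (\<Sum>z\<in>C. cnj (v z) * v z)"
        unfolding w_def by (simp add: right_diff_distrib sum_subtractf sum_distrib_left mult.left_commute)
      also have "\<dots> = 0" unfolding dl nv by simp
      finally have "(\<Sum>z\<in>C. cnj (v z) * w z) = 0" .
      then have Pw: "op_apply C (outer v) w = (\<lambda>_. 0)"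
        unfolding outer_apply by simp
      have "\<forall>x\<in>C. op_apply C S (op_apply C S w) x = 0"
        using Pw unfolding SS[symmetric] op_apply_mult by simp
      from psd_sqrt_zero[OF fin S this] True
      have "op_apply C S w x = 0" by simp
      moreover have "op_apply C S w x = S x y - cnj (v y) * op_apply C S v x"
      proof -
        have "op_apply C S w x = (\<Sum>z\<in>C. S x z * (if z = y then 1 else 0)) - cnj (v y) * (\<Sum>z\<in>C. S x z * v z)"
          unfolding w_def op_apply_def by (simp add: right_diff_distrib sum_subtractf sum_distrib_left mult.left_commute)
        then show ?thesis unfolding dl op_apply_def by simp
      qed
      ultimately show ?thesis unfolding Sv l1 outer_def by simp
    qed
  qed
qed

lemma psd_outer:
  assumes v: "is_vec C v"
  shows "psd C (outer v)"
proof -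
  have "qform C (outer v) u = (\<Sum>x\<in>C. cnj (u x) * v x) * cnj (\<Sum>x\<in>C. cnj (u x) * v x)" for u
    unfolding qform_def outer_def by (simp add: sum_distrib_left sum_distrib_right algebra_simps)
  then have "qform C (outer v) u = of_real ((cmod (\<Sum>x\<in>C. cnj (u x) * v x))\<^sup>2)" for u
    by (simp only: complex_norm_square)
  then show ?thesis unfolding psd_def using v unfolding is_op_def is_vec_def outer_def by auto
qed

lemma outer_idem:
  assumes "(\<Sum>x\<in>C. cnj (v x) * v x) = 1"
  shows "op_mult C (outer v) (outer v) = outer v"
proof -
  have "(\<Sum>z\<in>C. v x * cnj (v z) * (v z * cnj (v y))) = v x * cnj (v y) * (\<Sum>z\<in>C. cnj (v z) * v z)" for x y
    by (simp add: sum_distrib_left algebra_simps)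
  then show ?thesis using assms unfolding op_mult_def outer_def by (intro ext) simp
qed

lemma op_sqrt_outer:
  assumes fin: "finite C" and v: "is_vec C v" and nv: "(\<Sum>x\<in>C. cnj (v x) * v x) = 1"
  shows "op_sqrt C (outer v) = outer v"
  unfolding op_sqrt_def
  by (rule the_equality) (use psd_outer[OF v] outer_idem[OF nv] sqrt_pure_unique[OF fin v nv] in auto)

lemma fidelity_pure:
  assumes fin: "finite C" and v: "is_vec C v" and nv: "(\<Sum>x\<in>C. cnj (v x) * v x) = 1"
  shows "fidelity C (outer v) (outer v) = 1"
  unfolding fidelity_def op_sqrt_outer[OF assms] outer_idem[OF nv] 
  using nv unfolding op_trace_def outer_def by (simp add: mult.commute)



lemma lists_of_Suc: "lists_of (Suc n) m = (\<lambda>(x, xs). x # xs) ` ({..<m} \<times> lists_of n m)"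
proof (intro Set.set_eqI iffI)
  fix zs assume "zs \<in> lists_of (Suc n) m"
  then obtain x xs where zs: "zs = x # xs" "length xs = n" and all: "\<forall>i<Suc n. zs ! i < m"
    unfolding lists_of_def by (cases zs) auto
  then have "x < m" "\<forall>i<n. xs ! i < m" by (auto dest: spec[of _ 0] spec[of _ "Suc i" for i])
  then show "zs \<in> (\<lambda>(x, xs). x # xs) ` ({..<m} \<times> lists_of n m)"
    using zs unfolding lists_of_def by auto
next
  fix zs assume "zs \<in> (\<lambda>(x, xs). x # xs) ` ({..<m} \<times> lists_of n m)"
  then show "zs \<in> lists_of (Suc n) m"
    unfolding lists_of_def by (auto simp: nth_Cons less_Suc_eq_0_disj split: nat.splits)
qed

lemma finite_lists_of: "finite (lists_of n m)"
proof -
  have "lists_of n m \<subseteq> {xs. set xs \<subseteq> {..<m} \<and> length xs = n}"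
    unfolding lists_of_def by (auto simp: in_set_conv_nth)
  moreover have "finite {xs. set xs \<subseteq> {..<m} \<and> length xs = n}"
    by (rule finite_lists_length_eq) simp
  ultimately show ?thesis by (rule finite_subset)
qed

lemma sum_lists_prod:
  "(\<Sum>xs\<in>lists_of n m. \<Prod>i<n. f i (xs ! i)) = (\<Prod>i<n. \<Sum>a<m. (f i a :: complex))"
proof (induction n arbitrary: f)
  case 0
  have "lists_of 0 m = {[]}" unfolding lists_of_def by auto
  then show ?case by simp
next
  case (Suc n)
  have inj: "inj_on (\<lambda>(x, xs). x # xs) ({..<m} \<times> lists_of n m)" by (auto simp: inj_on_def)
  have "(\<Sum>xs\<in>lists_of (Suc n) m. \<Prod>i<Suc n. f i (xs ! i))
      = (\<Sum>(x, xs)\<in>{..<m} \<times> lists_of n m. \<Prod>i<Suc n. f i ((x # xs) ! i))"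
    unfolding lists_of_Suc by (subst sum.reindex[OF inj]) (simp add: case_prod_unfold)
  also have "\<dots> = (\<Sum>x<m. \<Sum>xs\<in>lists_of n m. f 0 x * (\<Prod>i<n. f (Suc i) (xs ! i)))"
    by (subst sum.cartesian_product[symmetric]) (simp add: prod.lessThan_Suc_shift del: prod.lessThan_Suc)
  also have "\<dots> = (\<Sum>x<m. f 0 x) * (\<Prod>i<n. \<Sum>a<m. f (Suc i) a)"
    by (simp add: sum_distrib_left[symmetric] sum_distrib_right Suc.IH[of "\<lambda>i. f (Suc i)"])
  also have "\<dots> = (\<Prod>i<Suc n. \<Sum>a<m. f i a)" by (simp add: prod.lessThan_Suc_shift del: prod.lessThan_Suc)
  finally show ?case .
qed

lemma sum_lists3:
  "(\<Sum>c\<in>lists_of n d \<times> lists_of n d \<times> lists_of n dR. \<Prod>i<n. g (fst c ! i, fst (snd c) ! i, snd (snd c) ! i))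
   = (\<Sum>a<d. \<Sum>b<d. \<Sum>r<dR. (g (a, b, r) :: complex)) ^ n"
proof -
  have "(\<Sum>c\<in>lists_of n d \<times> lists_of n d \<times> lists_of n dR. \<Prod>i<n. g (fst c ! i, fst (snd c) ! i, snd (snd c) ! i))
     = (\<Sum>xs\<in>lists_of n d. \<Sum>ys\<in>lists_of n d. \<Sum>rs\<in>lists_of n dR. \<Prod>i<n. g (xs ! i, ys ! i, rs ! i))"
    by (simp add: sum.cartesian_product case_prod_unfold)
  also have "\<dots> = (\<Sum>xs\<in>lists_of n d. \<Sum>ys\<in>lists_of n d. \<Prod>i<n. \<Sum>r<dR. g (xs ! i, ys ! i, r))"
    by (intro sum.cong refl sum_lists_prod)
  also have "\<dots> = (\<Sum>xs\<in>lists_of n d. \<Prod>i<n. \<Sum>b<d. \<Sum>r<dR. g (xs ! i, b, r))"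
    by (intro sum.cong refl sum_lists_prod)
  also have "\<dots> = (\<Prod>i<n. \<Sum>a<d. \<Sum>b<d. \<Sum>r<dR. g (a, b, r))"
    by (intro sum.cong refl sum_lists_prod)
  finally show ?thesis by simp
qed



lemma finite_AB: "finite (AB d)" unfolding AB_def by simp

lemma sum_delta_sub:
  assumes "finite C" "p \<in> C"
  shows "(\<Sum>q\<in>C. (A q - (if q = p then s else 0)) * f q) = (\<Sum>q\<in>C. A q * f q) - (s :: complex) * f p"
proof -
  have "(\<Sum>q\<in>C. (A q - (if q = p then s else 0)) * f q) = (\<Sum>q\<in>C. A q * f q - (if q = p then s * f q else 0))"
    by (rule sum.cong) (auto simp: algebra_simps)
  then show ?thesis using assms by (simp add: sum_subtractf)
qed

lemma swapped_pure_alt: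
  "swapped_pure d W \<psi> (x, y, r) = (\<Sum>q\<in>AB d. swap_op d W (x, y) q * \<psi> (fst q, snd q, r))"
  unfolding swapped_pure_def AB_def
  by (simp add: sum.cartesian_product atLeast0LessThan case_prod_unfold)

lemma swap_fixed:
  assumes pur: "purification d dR \<rho> \<psi>"
    and sup: "supported_on (AB d) \<rho> (\<lambda>v. op_apply (AB d) (swap_op d W) v = (\<lambda>x. s * v x))"
  shows "swapped_pure d W \<psi> p = s * \<psi> p"
proof -
  let ?T = "swap_op d W" and ?C = "AB d"
  have fin: "finite ?C" by (rule finite_AB)
  have psi0: "\<psi> (a, b, r) = 0" if "\<not> (a < d \<and> b < d \<and> r < dR)" for a b r
    using pur that unfolding purification_def Defs.unit_vec_def is_vec_def ABR_def by auto
  have rho: "\<rho> q q' = (\<Sum>r<dR. \<psi> (fst q, snd q, r) * cnj (\<psi> (fst q', snd q', r)))" for q q'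
    using pur unfolding purification_def ptrace_R_def by (auto simp: case_prod_unfold)
  have T0: "?T p q = 0" if "p \<notin> ?C" for p q
    using that unfolding swap_op_def by (auto simp: case_prod_unfold)
  have col: "(\<Sum>q\<in>?C. ?T p q * \<rho> q q') = s * \<rho> p q'" if q': "q' \<in> ?C" for p q'
  proof -
    define v where "v = (\<lambda>z. if z = q' then (1::complex) else 0)"
    have iv: "is_vec ?C v" unfolding v_def is_vec_def using q' by auto
    have rv: "op_apply ?C \<rho> v = (\<lambda>x. \<rho> x q')"
    proof
      fix x
      have "op_apply ?C \<rho> v x = (\<Sum>y\<in>?C. if y = q' then \<rho> x y else 0)"
        unfolding op_apply_def v_def by (rule sum.cong) auto
      then show "op_apply ?C \<rho> v x = \<rho> x q'" using q' fin by simp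
    qed
    from sup iv have "op_apply ?C ?T (op_apply ?C \<rho> v) = (\<lambda>x. s * op_apply ?C \<rho> v x)"
      unfolding supported_on_def by blast
    then show ?thesis unfolding rv by (cases p) (simp add: op_apply_def fun_eq_iff)
  qed
  define D where "D = (\<lambda>p q. ?T p q - (if q = p then s else 0))"
  define E where "E = (\<lambda>p r. \<Sum>q\<in>?C. D p q * \<psi> (fst q, snd q, r))"
  have E_alt: "E p r = (\<Sum>q\<in>?C. ?T p q * \<psi> (fst q, snd q, r)) - s * \<psi> (fst p, snd p, r)" if "p \<in> ?C" for p r
  proof -
    show ?thesis unfolding E_def D_def using sum_delta_sub[OF fin that] .
  qed
  have Dcol: "(\<Sum>q\<in>?C. D p q * \<rho> q q') = 0" if "p \<in> ?C" "q' \<in> ?C" for p q'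
  proof -
    show ?thesis unfolding D_def sum_delta_sub[OF fin that(1)] using col[OF that(2)] by simp
  qed
  have E0: "E p r = 0" if p: "p \<in> ?C" and r: "r < dR" for p r
  proof -
    have "(\<Sum>r<dR. E p r * cnj (E p r)) = (\<Sum>r<dR. \<Sum>q'\<in>?C. cnj (D p q') * (E p r * cnj (\<psi> (fst q', snd q', r))))"
    proof -
      have "cnj (E p r) = (\<Sum>q'\<in>?C. cnj (D p q') * cnj (\<psi> (fst q', snd q', r)))" for r
        unfolding E_def by simp
      then show ?thesis by (simp add: sum_distrib_left algebra_simps)
    qed
    also have "\<dots> = (\<Sum>q'\<in>?C. cnj (D p q') * (\<Sum>r<dR. E p r * cnj (\<psi> (fst q', snd q', r))))"
      by (subst sum.swap) (simp add: sum_distrib_left)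
    also have "\<dots> = (\<Sum>q'\<in>?C. cnj (D p q') * (\<Sum>q\<in>?C. D p q * \<rho> q q'))"
    proof (rule sum.cong[OF refl])
      fix q' assume "q' \<in> ?C"
      have "(\<Sum>r<dR. E p r * cnj (\<psi> (fst q', snd q', r))) = (\<Sum>r<dR. \<Sum>q\<in>?C. D p q * (\<psi> (fst q, snd q, r) * cnj (\<psi> (fst q', snd q', r))))"
        unfolding E_def by (simp add: sum_distrib_right mult.assoc)
      also have "\<dots> = (\<Sum>q\<in>?C. D p q * \<rho> q q')"
        unfolding rho by (subst sum.swap) (simp add: sum_distrib_left)
      finally show "cnj (D p q') * (\<Sum>r<dR. E p r * cnj (\<psi> (fst q', snd q', r))) = cnj (D p q') * (\<Sum>q\<in>?C. D p q * \<rho> q q')" by simp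
    qed
    also have "\<dots> = 0" using Dcol p by simp
    finally have "(\<Sum>r<dR. E p r * cnj (E p r)) = 0" .
    then have "(\<Sum>r<dR. (cmod (E p r))\<^sup>2) = 0"
      by (metis (no_types, lifting) of_real_eq_0_iff of_real_sum complex_norm_square sum.cong)
    then have "\<forall>r\<in>{..<dR}. (cmod (E p r))\<^sup>2 = 0"
      by (subst (asm) sum_nonneg_eq_0_iff) auto
    then show ?thesis using r by simp
  qed
  obtain x y r where p: "p = (x, y, r)" by (cases p) auto
  show ?thesis
  proof (cases "(x, y) \<in> ?C \<and> r < dR")
    case True
    then have "E (x, y) r = 0" by (intro E0) auto
    then show ?thesis unfolding p swapped_pure_alt using E_alt[of "(x, y)" r] True by simp
  next
    case False
    then have "\<psi> (x, y, r) = 0" using psi0 unfolding AB_def by auto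
    moreover have "swapped_pure d W \<psi> (x, y, r) = 0"
      unfolding swapped_pure_alt using False T0 psi0 by (auto intro!: sum.neutral)
    ultimately show ?thesis unfolding p by simp
  qed
qed



lemma party_in_0: "party_in d n 0 = lists_of n d"
  unfolding party_in_def lists_of_def by auto

lemma unit_sum3:
  assumes "unit_vec (ABR d dR) \<psi>"
  shows "(\<Sum>a<d. \<Sum>b<d. \<Sum>r<dR. cnj (\<psi> (a, b, r)) * \<psi> (a, b, r)) = 1"
proof -
  have "(\<Sum>x\<in>ABR d dR. (cmod (\<psi> x))\<^sup>2) = 1" using assms unfolding Defs.unit_vec_def by simp
  then have "(\<Sum>x\<in>ABR d dR. complex_of_real ((cmod (\<psi> x))\<^sup>2)) = 1"
    by (metis of_real_1 of_real_sum)
  then have "(\<Sum>x\<in>ABR d dR. cnj (\<psi> x) * \<psi> x) = 1"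
    by (simp only: complex_norm_square mult.commute)
  then show ?thesis unfolding ABR_def
    by (simp add: sum.cartesian_product atLeast0LessThan case_prod_unfold)
qed

lemma uncommon_zero:
  assumes pur: "purification d dR \<rho> \<psi>"
    and sw: "\<And>p. swapped_pure d W \<psi> p = s * \<psi> p" and s: "s = 1 \<or> s = -1"
  shows "uncommon_info d dR W \<psi> = 0"
proof -
  define F where "F n = (\<lambda>(xs, ys, rs). if (xs, ys, rs) \<in> out_carrier d dR n
      then (\<Prod>i<n. \<psi> (xs ! i, ys ! i, rs ! i)) else 0)" for n
  have inp: "input_vec d dR \<psi> n 0 = F n" for n
    unfolding input_vec_def F_def party_in_0 out_carrier_def by (auto simp: fun_eq_iff)
  have tgt: "target_vec d dR W \<psi> n = (\<lambda>c. s ^ n * F n c)" for n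
    unfolding target_vec_def F_def out_carrier_def sw by (auto simp: fun_eq_iff prod.distrib)
  have s2: "s ^ n * cnj (s ^ n) = 1" for n
    using s by (auto simp flip: power_mult_distrib)
  have outer_eq: "outer (target_vec d dR W \<psi> n) = outer (F n)" for n
  proof (intro ext)
    fix x y
    have "outer (target_vec d dR W \<psi> n) x y = (s ^ n * cnj (s ^ n)) * (F n x * cnj (F n y))"
      unfolding tgt outer_def by (simp add: algebra_simps)
    then show "outer (target_vec d dR W \<psi> n) x y = outer (F n) x y"
      unfolding s2 outer_def by simp
  qed
  have fin: "finite (out_carrier d dR n)" for n
    unfolding out_carrier_def by (simp add: finite_lists_of)
  have isv: "is_vec (out_carrier d dR n) (F n)" for n
    unfolding is_vec_def F_def by auto
  have nv: "(\<Sum>c\<in>out_carrier d dR n. cnj (F n c) * F n c) = 1" for n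
  proof -
    have "(\<Sum>c\<in>out_carrier d dR n. cnj (F n c) * F n c)
        = (\<Sum>c\<in>out_carrier d dR n. \<Prod>i<n. (\<lambda>t. cnj (\<psi> t) * \<psi> t) (fst c ! i, fst (snd c) ! i, snd (snd c) ! i))"
      by (rule sum.cong) (auto simp: F_def prod.distrib)
    also have "\<dots> = (\<Sum>a<d. \<Sum>b<d. \<Sum>r<dR. (\<lambda>t. cnj (\<psi> t) * \<psi> t) (a, b, r)) ^ n"
      unfolding out_carrier_def by (rule sum_lists3)
    also have "\<dots> = 1"
      using unit_sum3 pur unfolding purification_def by simp
    finally show ?thesis .
  qed
  have fid: "fidelity (out_carrier d dR n) (outer (input_vec d dR \<psi> n 0)) (outer (target_vec d dR W \<psi> n)) = 1" for n
    unfolding inp outer_eq by (rule fidelity_pure[OF fin isv nv])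
  have ach: "achievable_rate d dR W \<psi> r" if r: "0 \<le> r" for r
    unfolding achievable_rate_def
  proof (intro exI conjI allI)
    show "locc (party_in d n ((\<lambda>_. 0) n)) (party_in d n ((\<lambda>_. 0) n)) (lists_of n d) (lists_of n d) ((\<lambda>_ \<rho>. \<rho>) n)" for n
      unfolding party_in_0 by (simp add: locc_id finite_lists_of)
    show "limsup (\<lambda>n. ereal (real ((\<lambda>_. 0) n) / real n)) \<le> ereal r"
      using r by (simp add: Limsup_const)
    show "(\<lambda>n. fidelity (out_carrier d dR n) ((\<lambda>_ \<rho>. \<rho>) n (outer (input_vec d dR \<psi> n ((\<lambda>_. 0) n))))
                      (outer (target_vec d dR W \<psi> n))) \<longlonglongrightarrow> 1"
      using fid by simp
  qed
  have ge: "0 \<le> r" if a: "achievable_rate d dR W \<psi> r" for r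
  proof -
    obtain k :: "nat \<Rightarrow> nat" where lk: "limsup (\<lambda>n. ereal (real (k n) / real n)) \<le> ereal r"
      using a unfolding achievable_rate_def by blast
    have "0 \<le> limsup (\<lambda>n. ereal (real (k n) / real n))"
      by (rule le_Limsup) auto
    with lk have "ereal 0 \<le> ereal r" using order_trans zero_ereal_def by metis
    then show ?thesis by simp
  qed
  have "{r. achievable_rate d dR W \<psi> r} = {0..}" using ach ge by auto
  then show ?thesis unfolding uncommon_info_def by simp
qed




definition madj :: "complex mat \<Rightarrow> complex mat" where
  "madj A = mat (dim_col A) (dim_row A) (\<lambda>(i, j). cnj (A $$ (j, i)))"

definition mcnj :: "complex mat \<Rightarrow> complex mat" where
  "mcnj A = mat (dim_row A) (dim_col A) (\<lambda>(i, j). cnj (A $$ (i, j)))"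

definition unitary_m :: "nat \<Rightarrow> complex mat \<Rightarrow> bool" where
  "unitary_m n U \<longleftrightarrow> U \<in> carrier_mat n n \<and> U * madj U = 1\<^sub>m n \<and> madj U * U = 1\<^sub>m n"

lemma madj_carrier[simp]: "A \<in> carrier_mat n m \<Longrightarrow> madj A \<in> carrier_mat m n"
  unfolding madj_def by auto
lemma mcnj_carrier[simp]: "A \<in> carrier_mat n m \<Longrightarrow> mcnj A \<in> carrier_mat n m"
  unfolding mcnj_def by auto
lemma madj_dims[simp]: "dim_row (madj A) = dim_col A" "dim_col (madj A) = dim_row A"
  unfolding madj_def by auto
lemma mcnj_dims[simp]: "dim_row (mcnj A) = dim_row A" "dim_col (mcnj A) = dim_col A"
  unfolding mcnj_def by auto
lemma madj_index[simp]: "i < dim_col A \<Longrightarrow> j < dim_row A \<Longrightarrow> madj A $$ (i, j) = cnj (A $$ (j, i))"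
  unfolding madj_def by auto
lemma mcnj_index[simp]: "i < dim_row A \<Longrightarrow> j < dim_col A \<Longrightarrow> mcnj A $$ (i, j) = cnj (A $$ (i, j))"
  unfolding mcnj_def by auto

lemma mult_index_sum:
  assumes "A \<in> carrier_mat n k" "B \<in> carrier_mat k m" "i < n" "j < m"
  shows "(A * B) $$ (i, j) = (\<Sum>l<k. A $$ (i, l) * B $$ (l, j))"
  using assms by (simp add: scalar_prod_def atLeast0LessThan)

lemma madj_mult:
  assumes "A \<in> carrier_mat n k" "B \<in> carrier_mat k m"
  shows "madj (A * B) = madj B * madj A"
  by (rule eq_matI) (use assms in \<open>auto simp del: index_mult_mat(1) simp add: index_mult_mat(2,3) mult_index_sum[OF assms] mult_index_sum[OF madj_carrier[OF assms(2)] madj_carrier[OF assms(1)]] mult.commute\<close>)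

lemma mcnj_mult:
  assumes "A \<in> carrier_mat n k" "B \<in> carrier_mat k m"
  shows "mcnj (A * B) = mcnj A * mcnj B"
  by (rule eq_matI) (use assms in \<open>auto simp del: index_mult_mat(1) simp add: index_mult_mat(2,3) mult_index_sum[OF assms] mult_index_sum[OF mcnj_carrier[OF assms(1)] mcnj_carrier[OF assms(2)]]\<close>)

lemma transpose_madj: "(madj A)\<^sup>T = mcnj A"
  by (rule eq_matI) auto
lemma transpose_mcnj: "(mcnj A)\<^sup>T = madj A"
  by (rule eq_matI) auto
lemma madj_mcnj: "madj (mcnj A) = A\<^sup>T"
  by (rule eq_matI) auto
lemma mcnj_madj: "mcnj (madj A) = A\<^sup>T"
  by (rule eq_matI) auto
lemma mcnj_one[simp]: "mcnj (1\<^sub>m n) = 1\<^sub>m n"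
  by (rule eq_matI) auto

lemma unitary_m_I:
  assumes "U \<in> carrier_mat n n" "madj U * U = 1\<^sub>m n"
  shows "unitary_m n U"
  using assms mat_mult_left_right_inverse[of "madj U" n U] unfolding unitary_m_def by auto

lemma unitary_mult:
  assumes A: "unitary_m n A" and B: "unitary_m n B"
  shows "unitary_m n (A * B)"
proof (rule unitary_m_I)
  have Ac: "A \<in> carrier_mat n n" and Bc: "B \<in> carrier_mat n n" using A B unfolding unitary_m_def by auto
  show "A * B \<in> carrier_mat n n" using Ac Bc by simp
  have "madj (A * B) * (A * B) = madj B * madj A * (A * B)"
    unfolding madj_mult[OF Ac Bc] ..
  also have "\<dots> = madj B * (madj A * (A * B))"
    using Ac Bc by (intro assoc_mult_mat[of _ n n _ n _ n]) auto
  also have "madj A * (A * B) = madj A * A * B"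
    using Ac Bc by (intro assoc_mult_mat[of _ n n _ n _ n, symmetric]) auto
  also have "\<dots> = B" using A Bc unfolding unitary_m_def by simp
  also have "madj B * B = 1\<^sub>m n" using B unfolding unitary_m_def by simp
  finally show "madj (A * B) * (A * B) = 1\<^sub>m n" .
qed

lemma unitary_mcnj:
  assumes A: "unitary_m n A"
  shows "unitary_m n (mcnj A)"
proof (rule unitary_m_I)
  have Ac: "A \<in> carrier_mat n n" using A unfolding unitary_m_def by auto
  show "mcnj A \<in> carrier_mat n n" using Ac by simp
  have "madj (mcnj A) * mcnj A = mcnj (madj A) * mcnj A" by (simp add: madj_mcnj mcnj_madj)
  also have "\<dots> = mcnj (madj A * A)" using Ac by (simp add: mcnj_mult[symmetric, of _ n n _ n])
  also have "\<dots> = 1\<^sub>m n" using A unfolding unitary_m_def by simp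
  finally show "madj (mcnj A) * mcnj A = 1\<^sub>m n" .
qed


definition unitv :: "complex vec \<Rightarrow> bool" where
  "unitv v \<longleftrightarrow> (\<Sum>k<dim_vec v. cnj (v $ k) * v $ k) = 1"

definition nrm :: "complex vec \<Rightarrow> real" where
  "nrm v = sqrt (\<Sum>k<dim_vec v. (cmod (v $ k))\<^sup>2)"

definition normalize_v :: "complex vec \<Rightarrow> complex vec" where
  "normalize_v v = complex_of_real (1 / nrm v) \<cdot>\<^sub>v v"

lemma normalize_dim[simp]: "dim_vec (normalize_v v) = dim_vec v"
  unfolding normalize_v_def by simp

lemma normalize_index: "k < dim_vec v \<Longrightarrow> normalize_v v $ k = complex_of_real (1 / nrm v) * v $ k"
  unfolding normalize_v_def by simp

lemma sum_cnj_norm: "(\<Sum>k<n. cnj ((v :: complex vec) $ k) * v $ k) = complex_of_real (\<Sum>k<n. (cmod (v $ k))\<^sup>2)"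
  by (simp only: of_real_sum complex_norm_square mult.commute)

lemma nonzero_pos:
  assumes "(v :: complex vec) \<in> carrier_vec n" "v \<noteq> 0\<^sub>v n"
  shows "(\<Sum>k<n. (cmod (v $ k))\<^sup>2) > 0"
proof -
  obtain i where i: "i < n" "v $ i \<noteq> 0"
    using assms by (metis eq_vecI carrier_vecD index_zero_vec(1) index_zero_vec(2))
  show ?thesis by (rule sum_pos2[of "{..<n}" i]) (use i in auto)
qed

lemma normalize_unit:
  assumes v: "v \<in> carrier_vec n" "v \<noteq> 0\<^sub>v n"
  shows "unitv (normalize_v v)"
proof -
  define S where "S = (\<Sum>k<n. (cmod (v $ k))\<^sup>2)"
  have S: "S > 0" unfolding S_def by (rule nonzero_pos[OF v])
  have dv: "dim_vec v = n" using v by auto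
  have "(\<Sum>k<n. cnj (normalize_v v $ k) * normalize_v v $ k) = (\<Sum>k<n. complex_of_real (1 / S) * (cnj (v $ k) * v $ k))"
  proof (rule sum.cong[OF refl])
    fix k assume "k \<in> {..<n}"
    then have "normalize_v v $ k = complex_of_real (1 / sqrt S) * v $ k"
      using dv by (simp add: normalize_index nrm_def S_def)
    moreover have "complex_of_real (1 / sqrt S) * complex_of_real (1 / sqrt S) = complex_of_real (1 / S)"
      using S by (simp flip: of_real_mult)
    ultimately show "cnj (normalize_v v $ k) * normalize_v v $ k = complex_of_real (1 / S) * (cnj (v $ k) * v $ k)"
      by (simp add: algebra_simps)
  qed
  also have "\<dots> = complex_of_real (1 / S) * complex_of_real S"
    unfolding sum_distrib_left[symmetric] sum_cnj_norm S_def ..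
  also have "\<dots> = 1" using S by (simp flip: of_real_mult)
  finally show ?thesis unfolding unitv_def using dv by simp
qed

lemma normalize_id:
  assumes "unitv v"
  shows "normalize_v v = v"
proof -
  have "complex_of_real (\<Sum>k<dim_vec v. (cmod (v $ k))\<^sup>2) = 1"
    using assms unfolding unitv_def sum_cnj_norm .
  then have "(\<Sum>k<dim_vec v. (cmod (v $ k))\<^sup>2) = 1" by (metis of_real_eq_1_iff)
  then have "nrm v = 1" unfolding nrm_def by simp
  then show ?thesis unfolding normalize_v_def by simp
qed

lemma unitv_nonzero: "v \<in> carrier_vec n \<Longrightarrow> unitv v \<Longrightarrow> v \<noteq> 0\<^sub>v n"
  unfolding unitv_def by auto

lemma cscalar_sum: "v \<in> carrier_vec n \<Longrightarrow> w \<in> carrier_vec n \<Longrightarrow> v \<bullet>c w = (\<Sum>k<n. v $ k * cnj (w $ k))"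
  by (simp add: scalar_prod_def atLeast0LessThan)

lemma unitary_first_col:
  assumes u: "u \<in> carrier_vec n" and nu: "unitv u" and n: "0 < n"
  shows "\<exists>U. unitary_m n U \<and> (\<forall>k<n. U $$ (k, 0) = u $ k)"
proof -
  interpret cof_vec_space n "TYPE(complex)" .
  have u0: "u \<noteq> 0\<^sub>v n" by (rule unitv_nonzero[OF u nu])
  define b where "b = basis_completion u"
  from basis_completion[OF u u0, folded b_def]
  have dist_b: "distinct b" and indep: "\<not> lin_dep (set b)" and bc: "set b \<subseteq> carrier_vec n"
    and hdb: "hd b = u" and len_b: "length b = n" by auto
  from hdb len_b n obtain vs where bv: "b = u # vs" by (cases b) auto
  define ws where "ws = gram_schmidt n b"
  from gram_schmidt_result[OF bc dist_b indep refl, folded ws_def]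
  have wsc: "set ws \<subseteq> carrier_vec n" and orth: "corthogonal ws" and len: "length ws = length b" by auto
  have lenw: "length ws = n" using len len_b by simp
  have hdws: "hd ws = u" unfolding ws_def bv by (rule gram_schmidt_hd[OF u])
  define ws' where "ws' = map normalize_v ws"
  define U where "U = mat n n (\<lambda>(i, j). ws' ! j $ i)"
  have wsn: "ws ! j \<in> carrier_vec n" if "j < n" for j
    using wsc that lenw by auto
  have ws_nz: "ws ! j \<noteq> 0\<^sub>v n" if j: "j < n" for j
  proof
    assume "ws ! j = 0\<^sub>v n"
    then have "ws ! j \<bullet>c ws ! j = 0" by simp
    with corthogonalD[OF orth, of j j] j lenw show False by simp
  qed
  have unit_j: "unitv (ws' ! j)" if "j < n" for j
    unfolding ws'_def using that lenw normalize_unit[OF wsn[OF that] ws_nz[OF that]] by simp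
  have Uc: "U \<in> carrier_mat n n" unfolding U_def by simp
  have Uidx: "U $$ (k, j) = ws' ! j $ k" if "k < n" "j < n" for k j
    unfolding U_def using that by simp
  have ws'idx: "ws' ! j $ k = complex_of_real (1 / nrm (ws ! j)) * (ws ! j $ k)" if "k < n" "j < n" for k j
    unfolding ws'_def using that lenw wsn[OF that(2)] by (simp add: normalize_index)
  have "madj U * U = 1\<^sub>m n"
  proof (rule eq_matI)
    fix i j assume "i < dim_row (1\<^sub>m n)" "j < dim_col (1\<^sub>m n)"
    then have ij: "i < n" "j < n" by auto
    have "(madj U * U) $$ (i, j) = (\<Sum>l<n. cnj (ws' ! i $ l) * ws' ! j $ l)"
      using ij Uc by (simp del: index_mult_mat(1) add: mult_index_sum[OF madj_carrier[OF Uc] Uc] Uidx)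
    also have "\<dots> = 1\<^sub>m n $$ (i, j)"
    proof (cases "i = j")
      case True
      then show ?thesis using unit_j[OF ij(2)] ij lenw wsn[OF ij(2)] unfolding unitv_def ws'_def by simp
    next
      case False
      have "(\<Sum>l<n. cnj (ws' ! i $ l) * ws' ! j $ l)
          = cnj (complex_of_real (1 / nrm (ws ! i))) * complex_of_real (1 / nrm (ws ! j)) * (\<Sum>l<n. ws ! j $ l * cnj (ws ! i $ l))"
        by (simp add: ws'idx ij sum_distrib_left algebra_simps)
      also have "(\<Sum>l<n. ws ! j $ l * cnj (ws ! i $ l)) = ws ! j \<bullet>c ws ! i"
        using cscalar_sum[OF wsn[OF ij(2)] wsn[OF ij(1)]] by simp
      also have "\<dots> = 0" using corthogonalD[OF orth, of j i] ij lenw False by simp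
      finally show ?thesis using False ij by simp
    qed
    finally show "(madj U * U) $$ (i, j) = 1\<^sub>m n $$ (i, j)" .
  qed (use Uc in auto)
  then have "unitary_m n U" by (rule unitary_m_I[OF Uc])
  moreover have "U $$ (k, 0) = u $ k" if "k < n" for k
  proof -
    have "ws' ! 0 = normalize_v (hd ws)" unfolding ws'_def using lenw n by (cases ws) auto
    then show ?thesis using Uidx[OF that n] unfolding hdws normalize_id[OF nu] by simp
  qed
  ultimately show ?thesis by blast
qed


lemma mv_index_sum:
  assumes "A \<in> carrier_mat n m" "v \<in> carrier_vec m" "i < n"
  shows "(A *\<^sub>v v) $ i = (\<Sum>k<m. A $$ (i, k) * v $ k)"
  using assms by (simp add: scalar_prod_def atLeast0LessThan)

lemma normalize_carrier: "v \<in> carrier_vec n \<Longrightarrow> normalize_v v \<in> carrier_vec n"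
  unfolding normalize_v_def by simp

lemma exists_uq:
  assumes Phi: "Phi \<in> carrier_mat n n" and n: "0 < n"
  shows "\<exists>q u \<sigma> \<tau>. q \<in> carrier_vec n \<and> u \<in> carrier_vec n \<and> unitv q \<and> unitv u \<and>
           Phi *\<^sub>v q = \<sigma> \<cdot>\<^sub>v u \<and> madj Phi *\<^sub>v u = \<tau> \<cdot>\<^sub>v q"
proof (cases "det Phi = 0")
  case True
  from True det_0_iff_vec_prod_zero[OF Phi] obtain q0 where
    q0: "q0 \<in> carrier_vec n" "q0 \<noteq> 0\<^sub>v n" "Phi *\<^sub>v q0 = 0\<^sub>v n" by auto
  have PhiT: "Phi\<^sup>T \<in> carrier_mat n n" using Phi by simp
  have "det Phi\<^sup>T = 0" using det_transpose[OF Phi] True by simp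
  with det_0_iff_vec_prod_zero[OF PhiT] obtain w0 where
    w0: "w0 \<in> carrier_vec n" "w0 \<noteq> 0\<^sub>v n" "Phi\<^sup>T *\<^sub>v w0 = 0\<^sub>v n" by auto
  define u0 where "u0 = vec n (\<lambda>i. cnj (w0 $ i))"
  have u0c: "u0 \<in> carrier_vec n" unfolding u0_def by simp
  have u0nz: "u0 \<noteq> 0\<^sub>v n"
  proof
    assume "u0 = 0\<^sub>v n"
    have "w0 $ i = 0" if "i < n" for i
    proof -
      have "u0 $ i = 0" using \<open>u0 = 0\<^sub>v n\<close> that by simp
      then show ?thesis using that by (simp add: u0_def)
    qed
    then have "w0 = 0\<^sub>v n" by (intro eq_vecI) (use w0(1) in auto)
    with w0 show False by simp
  qed
  have adj0: "madj Phi *\<^sub>v u0 = 0\<^sub>v n"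
  proof (rule eq_vecI)
    fix i assume "i < dim_vec (0\<^sub>v n :: complex vec)"
    then have i: "i < n" by simp
    have "(madj Phi *\<^sub>v u0) $ i = (\<Sum>k<n. madj Phi $$ (i, k) * u0 $ k)"
      by (rule mv_index_sum[OF madj_carrier[OF Phi] u0c i])
    also have "\<dots> = cnj (\<Sum>k<n. Phi\<^sup>T $$ (i, k) * w0 $ k)"
      using i Phi by (simp add: u0_def)
    also have "\<dots> = cnj ((Phi\<^sup>T *\<^sub>v w0) $ i)"
      by (simp only: mv_index_sum[OF PhiT w0(1) i])
    also have "\<dots> = 0" using w0 i by simp
    finally show "(madj Phi *\<^sub>v u0) $ i = 0\<^sub>v n $ i" using i by simp
  qed (use Phi in auto)
  define q where "q = normalize_v q0"
  define u where "u = normalize_v u0"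
  have "Phi *\<^sub>v q = 0 \<cdot>\<^sub>v u"
    unfolding q_def normalize_v_def using mult_mat_vec[OF Phi q0(1)] q0 u0c
    by (auto simp: u_def normalize_v_def)
  moreover have "madj Phi *\<^sub>v u = 0 \<cdot>\<^sub>v q"
    unfolding u_def normalize_v_def using mult_mat_vec[OF madj_carrier[OF Phi] u0c] adj0 q0
    by (auto simp: q_def normalize_v_def)
  ultimately show ?thesis
    using normalize_unit[OF q0(1,2)] normalize_unit[OF u0c u0nz] normalize_carrier[OF q0(1)] normalize_carrier[OF u0c]
    unfolding q_def u_def by blast
next
  case False
  define G where "G = madj Phi * Phi"
  have Gc: "G \<in> carrier_mat n n" unfolding G_def using Phi madj_carrier[OF Phi] by (rule mult_carrier_mat[rotated])
  have "degree (char_poly G) = n" using degree_monic_char_poly[OF Gc] by simp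
  then have "\<not> constant (poly (char_poly G))" using n by (simp add: constant_degree)
  then obtain l where "poly (char_poly G) l = 0" using fundamental_theorem_of_algebra by blast
  then have "eigenvalue G l" using eigenvalue_root_char_poly[OF Gc] by simp
  then obtain q0 where "eigenvector G q0 l" unfolding eigenvalue_def by blast
  then have q0: "q0 \<in> carrier_vec n" "q0 \<noteq> 0\<^sub>v n" "G *\<^sub>v q0 = l \<cdot>\<^sub>v q0"
    unfolding eigenvector_def using Gc by auto
  define q where "q = normalize_v q0"
  have qc: "q \<in> carrier_vec n" unfolding q_def by (rule normalize_carrier[OF q0(1)])
  have qu: "unitv q" unfolding q_def by (rule normalize_unit[OF q0(1,2)])
  have Gq: "G *\<^sub>v q = l \<cdot>\<^sub>v q"
    unfolding q_def normalize_v_def mult_mat_vec[OF Gc q0(1)] q0(3) smult_smult_assoc by (simp add: mult.commute)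
  define p where "p = Phi *\<^sub>v q"
  have pc: "p \<in> carrier_vec n" unfolding p_def using Phi qc by simp
  have pnz: "p \<noteq> 0\<^sub>v n"
  proof
    assume "p = 0\<^sub>v n"
    then have "det Phi = 0" using det_0_iff_vec_prod_zero[OF Phi] qc unitv_nonzero[OF qc qu] unfolding p_def by blast
    with False show False by simp
  qed
  define c where "c = complex_of_real (1 / nrm p)"
  have "nrm p > 0" unfolding nrm_def using nonzero_pos[OF pc pnz] pc by simp
  then have c0: "c \<noteq> 0" unfolding c_def by simp
  define u where "u = normalize_v p"
  have uc: "u \<in> carrier_vec n" unfolding u_def by (rule normalize_carrier[OF pc])
  have uu: "unitv u" unfolding u_def by (rule normalize_unit[OF pc pnz])
  have u_eq: "u = c \<cdot>\<^sub>v p" unfolding u_def normalize_v_def c_def ..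
  have "Phi *\<^sub>v q = (1 / c) \<cdot>\<^sub>v u"
    unfolding u_eq smult_smult_assoc using c0 by (simp add: p_def)
  moreover have "madj Phi *\<^sub>v u = (c * l) \<cdot>\<^sub>v q"
  proof -
    have "madj Phi *\<^sub>v u = c \<cdot>\<^sub>v (madj Phi *\<^sub>v (Phi *\<^sub>v q))"
      unfolding u_eq p_def using mult_mat_vec[OF madj_carrier[OF Phi]] Phi qc by simp
    also have "madj Phi *\<^sub>v (Phi *\<^sub>v q) = G *\<^sub>v q"
      unfolding G_def using assoc_mult_mat_vec[OF madj_carrier[OF Phi] Phi qc] by simp
    finally show ?thesis unfolding Gq smult_smult_assoc .
  qed
  ultimately show ?thesis using qc uc qu uu by blast
qed


lemma madj_madj: "madj (madj A) = A"
  by (rule eq_matI) auto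

lemma unitary_madj: "unitary_m n U \<Longrightarrow> unitary_m n (madj U)"
  unfolding unitary_m_def madj_madj by auto

lemma mult_split_first:
  assumes "A \<in> carrier_mat n (Suc m)" "B \<in> carrier_mat (Suc m) k" "i < n" "j < k"
  shows "(A * B) $$ (i, j) = A $$ (i, 0) * B $$ (0, j) + (\<Sum>l<m. A $$ (i, Suc l) * B $$ (Suc l, j))"
  using mult_index_sum[OF assms] by (simp add: sum.lessThan_Suc_shift del: sum.lessThan_Suc)

lemma sym_exists:
  assumes "Phi \<in> carrier_mat n n"
  shows "\<exists>W. unitary_m n W \<and> (W * Phi)\<^sup>T = W * Phi"
  using assms
proof (induction n arbitrary: Phi)
  case 0
  have "unitary_m 0 (1\<^sub>m 0)" by (rule unitary_m_I) (auto intro!: eq_matI)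
  moreover have "(1\<^sub>m 0 * Phi)\<^sup>T = 1\<^sub>m 0 * Phi" using 0 by (intro eq_matI) auto
  ultimately show ?case by blast
next
  case (Suc m)
  let ?n = "Suc m"
  have Phi: "Phi \<in> carrier_mat ?n ?n" by fact
  obtain q u \<sigma> \<tau> where qc: "q \<in> carrier_vec ?n" and uc: "u \<in> carrier_vec ?n"
    and qu: "unitv q" and uu: "unitv u" and Pq: "Phi *\<^sub>v q = \<sigma> \<cdot>\<^sub>v u" and Pu: "madj Phi *\<^sub>v u = \<tau> \<cdot>\<^sub>v q"
    using exists_uq[OF Phi] by blast
  obtain U where U: "unitary_m ?n U" and Ucol: "\<forall>k<?n. U $$ (k, 0) = u $ k"
    using unitary_first_col[OF uc uu] by blast
  obtain V where V: "unitary_m ?n V" and Vcol: "\<forall>k<?n. V $$ (k, 0) = q $ k"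
    using unitary_first_col[OF qc qu] by blast
  have Uc: "U \<in> carrier_mat ?n ?n" and Vc: "V \<in> carrier_mat ?n ?n" using U V unfolding unitary_m_def by auto
  have UU: "madj U * U = 1\<^sub>m ?n" "U * madj U = 1\<^sub>m ?n" and VV: "madj V * V = 1\<^sub>m ?n" "V * madj V = 1\<^sub>m ?n"
    using U V unfolding unitary_m_def by auto
  define P where "P = madj U * Phi * V"
  have Pc: "P \<in> carrier_mat ?n ?n" unfolding P_def using Uc Vc Phi by (meson madj_carrier mult_carrier_mat)
  have P2: "P = madj U * (Phi * V)" unfolding P_def using Uc Vc Phi by (meson assoc_mult_mat madj_carrier)
  have PV0: "(Phi * V) $$ (k, 0) = \<sigma> * U $$ (k, 0)" if k: "k < ?n" for k
  proof -
    have "(Phi * V) $$ (k, 0) = (\<Sum>l<?n. Phi $$ (k, l) * V $$ (l, 0))"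
      by (rule mult_index_sum[OF Phi Vc k]) simp
    also have "\<dots> = (\<Sum>l<?n. Phi $$ (k, l) * q $ l)" using Vcol by simp
    also have "\<dots> = (Phi *\<^sub>v q) $ k" by (rule mv_index_sum[OF Phi qc k, symmetric])
    also have "\<dots> = \<sigma> * U $$ (k, 0)" unfolding Pq using uc k Ucol by simp
    finally show ?thesis .
  qed
  have P_col: "P $$ (i, 0) = 0" if i: "0 < i" "i < ?n" for i
  proof -
    have "P $$ (i, 0) = (\<Sum>k<?n. madj U $$ (i, k) * (Phi * V) $$ (k, 0))"
      unfolding P2 by (rule mult_index_sum[OF madj_carrier[OF Uc] mult_carrier_mat[OF Phi Vc] i(2)]) simp
    also have "\<dots> = \<sigma> * (\<Sum>k<?n. madj U $$ (i, k) * U $$ (k, 0))"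
      using PV0 by (simp add: sum_distrib_left algebra_simps)
    also have "(\<Sum>k<?n. madj U $$ (i, k) * U $$ (k, 0)) = (madj U * U) $$ (i, 0)"
      by (rule mult_index_sum[OF madj_carrier[OF Uc] Uc i(2), symmetric]) simp
    also have "\<dots> = 0" unfolding UU using i by simp
    finally show ?thesis by simp
  qed
  have UP0: "(madj U * Phi) $$ (0, l) = cnj \<tau> * madj V $$ (0, l)" if l: "l < ?n" for l
  proof -
    have "(madj U * Phi) $$ (0, l) = (\<Sum>k<?n. madj U $$ (0, k) * Phi $$ (k, l))"
      by (rule mult_index_sum[OF madj_carrier[OF Uc] Phi _ l]) simp
    also have "\<dots> = cnj (\<Sum>k<?n. madj Phi $$ (l, k) * u $ k)"
      using Uc Phi l Ucol by (simp add: mult.commute)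
    also have "\<dots> = cnj ((madj Phi *\<^sub>v u) $ l)"
      by (simp only: mv_index_sum[OF madj_carrier[OF Phi] uc l])
    also have "\<dots> = cnj \<tau> * madj V $$ (0, l)" unfolding Pu using qc l Vc Vcol by simp
    finally show ?thesis .
  qed
  have P_row: "P $$ (0, j) = 0" if j: "0 < j" "j < ?n" for j
  proof -
    have "P $$ (0, j) = (\<Sum>l<?n. (madj U * Phi) $$ (0, l) * V $$ (l, j))"
      unfolding P_def by (rule mult_index_sum[OF mult_carrier_mat[OF madj_carrier[OF Uc] Phi] Vc _ j(2)]) simp
    also have "\<dots> = cnj \<tau> * (\<Sum>l<?n. madj V $$ (0, l) * V $$ (l, j))"
      using UP0 by (simp add: sum_distrib_left algebra_simps)
    also have "(\<Sum>l<?n. madj V $$ (0, l) * V $$ (l, j)) = (madj V * V) $$ (0, j)"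
      by (rule mult_index_sum[OF madj_carrier[OF Vc] Vc _ j(2), symmetric]) simp
    also have "\<dots> = 0" unfolding VV using j by simp
    finally show ?thesis by simp
  qed
  define P2' where "P2' = mat m m (\<lambda>(i, j). P $$ (Suc i, Suc j))"
  have P2'c: "P2' \<in> carrier_mat m m" unfolding P2'_def by simp
  obtain W2 where W2: "unitary_m m W2" and W2sym: "(W2 * P2')\<^sup>T = W2 * P2'"
    using Suc.IH[OF P2'c] by blast
  have W2c: "W2 \<in> carrier_mat m m" using W2 unfolding unitary_m_def by simp
  define W1 where "W1 = mat ?n ?n (\<lambda>(i, j). if i = 0 \<and> j = 0 then 1 else if i = 0 \<or> j = 0 then 0 else W2 $$ (i - 1, j - 1))"
  have W1c: "W1 \<in> carrier_mat ?n ?n" unfolding W1_def by simp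
  have W1idx: "W1 $$ (i, j) = (if i = 0 \<and> j = 0 then 1 else if i = 0 \<or> j = 0 then 0 else W2 $$ (i - 1, j - 1))"
    if "i < ?n" "j < ?n" for i j
    unfolding W1_def using that by simp
  have W1u: "unitary_m ?n W1"
  proof (rule unitary_m_I[OF W1c], rule eq_matI)
    fix i j assume "i < dim_row (1\<^sub>m ?n)" "j < dim_col (1\<^sub>m ?n)"
    then have ij: "i < ?n" "j < ?n" by auto
    have e: "(madj W1 * W1) $$ (i, j) = madj W1 $$ (i, 0) * W1 $$ (0, j) + (\<Sum>l<m. madj W1 $$ (i, Suc l) * W1 $$ (Suc l, j))"
      by (rule mult_split_first[OF madj_carrier[OF W1c] W1c ij])
    show "(madj W1 * W1) $$ (i, j) = 1\<^sub>m ?n $$ (i, j)"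
    proof (cases i)
      case 0
      then show ?thesis unfolding e using ij W1c by (cases j) (auto simp: W1idx)
    next
      case (Suc i')
      show ?thesis
      proof (cases j)
        case 0
        then show ?thesis unfolding e using ij W1c Suc by (auto simp: W1idx)
      next
        case (Suc j')
        have "(madj W1 * W1) $$ (i, j) = (\<Sum>l<m. madj W2 $$ (i', l) * W2 $$ (l, j'))"
          unfolding e using ij W1c W2c \<open>i = Suc i'\<close> Suc by (auto simp: W1idx)
        also have "\<dots> = (madj W2 * W2) $$ (i', j')"
          using ij \<open>i = Suc i'\<close> Suc by (intro mult_index_sum[OF madj_carrier[OF W2c] W2c, symmetric]) auto
        also have "\<dots> = 1\<^sub>m ?n $$ (i, j)" using W2 ij \<open>i = Suc i'\<close> Suc unfolding unitary_m_def by auto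
        finally show ?thesis .
      qed
    qed
  qed (use W1c in auto)
  define X where "X = W1 * P"
  have Xc: "X \<in> carrier_mat ?n ?n" unfolding X_def using W1c Pc by simp
  have Xidx: "X $$ (i, j) = (if i = 0 \<and> j = 0 then P $$ (0, 0) else if i = 0 \<or> j = 0 then 0
                 else (W2 * P2') $$ (i - 1, j - 1))" if ij: "i < ?n" "j < ?n" for i j
  proof -
    have e: "X $$ (i, j) = W1 $$ (i, 0) * P $$ (0, j) + (\<Sum>l<m. W1 $$ (i, Suc l) * P $$ (Suc l, j))"
      unfolding X_def by (rule mult_split_first[OF W1c Pc ij])
    show ?thesis
    proof (cases i)
      case 0
      then show ?thesis unfolding e using ij P_row by (cases j) (auto simp: W1idx)
    next
      case (Suc i')
      show ?thesis
      proof (cases j)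
        case 0
        then show ?thesis unfolding e using ij Suc P_col by (auto simp: W1idx)
      next
        case (Suc j')
        have "X $$ (i, j) = (\<Sum>l<m. W2 $$ (i', l) * P2' $$ (l, j'))"
          unfolding e using ij \<open>i = Suc i'\<close> Suc by (auto simp: W1idx P2'_def)
        also have "\<dots> = (W2 * P2') $$ (i', j')"
          using ij \<open>i = Suc i'\<close> Suc by (intro mult_index_sum[OF W2c P2'c, symmetric]) auto
        finally show ?thesis using \<open>i = Suc i'\<close> Suc by simp
      qed
    qed
  qed
  have Xsym: "X\<^sup>T = X"
  proof (rule eq_matI)
    fix i j assume "i < dim_row X" "j < dim_col X"
    then have ij: "i < ?n" "j < ?n" using Xc by auto
    have s: "(W2 * P2') $$ (j - 1, i - 1) = (W2 * P2') $$ (i - 1, j - 1)" if "0 < i" "0 < j"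
    proof -
      have "(W2 * P2') $$ (j - 1, i - 1) = (W2 * P2')\<^sup>T $$ (i - 1, j - 1)"
        using that ij W2c P2'c by simp
      then show ?thesis unfolding W2sym .
    qed
    show "X\<^sup>T $$ (i, j) = X $$ (i, j)"
      using ij Xc s by (auto simp: Xidx)
  qed (use Xc in auto)
  define W where "W = mcnj V * W1 * madj U"
  have Wu: "unitary_m ?n W"
    unfolding W_def by (intro unitary_mult unitary_mcnj unitary_madj V W1u U)
  have WPhi: "W * Phi = mcnj V * X * madj V"
  proof -
    have mUc: "madj U \<in> carrier_mat ?n ?n" and mVc: "madj V \<in> carrier_mat ?n ?n" and cVc: "mcnj V \<in> carrier_mat ?n ?n"
      using Uc Vc by auto
    have UPc: "madj U * Phi \<in> carrier_mat ?n ?n" using mUc Phi by simp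
    have "P * madj V = madj U * Phi * (V * madj V)"
      unfolding P_def by (rule assoc_mult_mat[OF UPc Vc mVc])
    also have "\<dots> = madj U * Phi" unfolding VV using UPc by (rule right_mult_one_mat)
    finally have PmV: "P * madj V = madj U * Phi" .
    have "X * madj V = W1 * (P * madj V)"
      unfolding X_def by (rule assoc_mult_mat[OF W1c Pc mVc])
    then have XmV: "X * madj V = W1 * (madj U * Phi)" unfolding PmV .
    have "mcnj V * X * madj V = mcnj V * (X * madj V)"
      by (rule assoc_mult_mat[OF cVc Xc mVc])
    also have "\<dots> = mcnj V * (W1 * (madj U * Phi))" unfolding XmV ..
    also have "\<dots> = mcnj V * (W1 * madj U * Phi)"
      using assoc_mult_mat[OF W1c mUc Phi] by simp
    also have "\<dots> = mcnj V * (W1 * madj U) * Phi"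
      using assoc_mult_mat[OF cVc mult_carrier_mat[OF W1c mUc] Phi] by simp
    also have "\<dots> = W * Phi" unfolding W_def using assoc_mult_mat[OF cVc W1c mUc] by simp
    finally show ?thesis by simp
  qed
  have "(W * Phi)\<^sup>T = W * Phi"
  proof -
    have "(mcnj V * X * madj V)\<^sup>T = (madj V)\<^sup>T * (mcnj V * X)\<^sup>T"
      using Vc Xc by (intro transpose_mult) auto
    also have "(mcnj V * X)\<^sup>T = X\<^sup>T * (mcnj V)\<^sup>T"
      using Vc Xc by (intro transpose_mult) auto
    finally show ?thesis unfolding WPhi transpose_madj transpose_mcnj Xsym
      using Vc Xc by (simp add: assoc_mult_mat[of _ ?n ?n _ ?n _ ?n])
  qed
  with Wu show ?case by blast
qed


lemma exists_W_fun:
  fixes d :: nat and \<phi> :: "nat \<times> nat \<Rightarrow> complex"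
  shows "\<exists>W. unitary_op {0..<d} W \<and>
     (\<forall>x<d. \<forall>y<d. (\<Sum>a<d. \<Sum>b<d. cnj (W b x) * W y a * \<phi> (a, b)) = \<phi> (x, y))"
proof -
  define Phi where "Phi = mat d d (\<lambda>(a, b). \<phi> (a, b))"
  have Phic: "Phi \<in> carrier_mat d d" unfolding Phi_def by simp
  obtain Wm where Wm: "unitary_m d Wm" and sym: "(Wm * Phi)\<^sup>T = Wm * Phi"
    using sym_exists[OF Phic] by blast
  have Wmc: "Wm \<in> carrier_mat d d" and WW: "madj Wm * Wm = 1\<^sub>m d" "Wm * madj Wm = 1\<^sub>m d"
    using Wm unfolding unitary_m_def by auto
  define W where "W = (\<lambda>y a. if y < d \<and> a < d then Wm $$ (y, a) else 0)"
  have u1: "op_mult {0..<d} (adj W) W = id_op {0..<d}"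
  proof (intro ext)
    fix x y
    show "op_mult {0..<d} (adj W) W x y = id_op {0..<d} x y"
    proof (cases "x < d \<and> y < d")
      case True
      have "op_mult {0..<d} (adj W) W x y = (\<Sum>z<d. madj Wm $$ (x, z) * Wm $$ (z, y))"
        unfolding op_mult_def adj_def W_def using True Wmc by (simp add: atLeast0LessThan)
      also have "\<dots> = (madj Wm * Wm) $$ (x, y)"
        using True by (intro mult_index_sum[OF madj_carrier[OF Wmc] Wmc, symmetric]) auto
      finally show ?thesis unfolding WW id_op_def using True by auto
    next
      case False
      then show ?thesis unfolding op_mult_def adj_def W_def id_op_def by auto
    qed
  qed
  have u2: "op_mult {0..<d} W (adj W) = id_op {0..<d}"
  proof (intro ext)
    fix x y
    show "op_mult {0..<d} W (adj W) x y = id_op {0..<d} x y"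
    proof (cases "x < d \<and> y < d")
      case True
      have "op_mult {0..<d} W (adj W) x y = (\<Sum>z<d. Wm $$ (x, z) * madj Wm $$ (z, y))"
        unfolding op_mult_def adj_def W_def using True Wmc by (simp add: atLeast0LessThan)
      also have "\<dots> = (Wm * madj Wm) $$ (x, y)"
        using True by (intro mult_index_sum[OF Wmc madj_carrier[OF Wmc], symmetric]) auto
      finally show ?thesis unfolding WW id_op_def using True by auto
    next
      case False
      then show ?thesis unfolding op_mult_def adj_def W_def id_op_def by auto
    qed
  qed
  have uop: "unitary_op {0..<d} W"
    unfolding unitary_op_def using u1 u2 by (auto simp: is_op_def W_def)
  have hfix: "(\<Sum>a<d. \<Sum>b<d. cnj (W b x) * W y a * \<phi> (a, b)) = \<phi> (x, y)" if xy: "x < d" "y < d" for x y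
  proof -
    have "(\<Sum>a<d. \<Sum>b<d. cnj (W b x) * W y a * \<phi> (a, b)) = (\<Sum>b<d. cnj (Wm $$ (b, x)) * (\<Sum>a<d. Wm $$ (y, a) * Phi $$ (a, b)))"
      unfolding W_def Phi_def using xy by (subst sum.swap) (simp add: sum_distrib_left algebra_simps)
    also have "\<dots> = (\<Sum>b<d. madj Wm $$ (x, b) * (Wm * Phi) $$ (b, y))"
    proof (rule sum.cong[OF refl])
      fix b assume b: "b \<in> {..<d}"
      have "(\<Sum>a<d. Wm $$ (y, a) * Phi $$ (a, b)) = (Wm * Phi) $$ (y, b)"
        using xy b by (intro mult_index_sum[OF Wmc Phic, symmetric]) auto
      also have "\<dots> = (Wm * Phi)\<^sup>T $$ (b, y)" using xy b Wmc Phic by simp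
      also have "\<dots> = (Wm * Phi) $$ (b, y)" unfolding sym ..
      finally show "cnj (Wm $$ (b, x)) * (\<Sum>a<d. Wm $$ (y, a) * Phi $$ (a, b)) = madj Wm $$ (x, b) * (Wm * Phi) $$ (b, y)"
        using xy b Wmc by simp
    qed
    also have "\<dots> = (madj Wm * (Wm * Phi)) $$ (x, y)"
      using xy by (intro mult_index_sum[OF madj_carrier[OF Wmc] mult_carrier_mat[OF Wmc Phic], symmetric]) auto
    also have "madj Wm * (Wm * Phi) = madj Wm * Wm * Phi"
      using assoc_mult_mat[OF madj_carrier[OF Wmc] Wmc Phic] by simp
    also have "\<dots> = Phi" unfolding WW using Phic by simp
    finally show ?thesis unfolding Phi_def using xy by simp
  qed
  show ?thesis using uop hfix by blast
qed

lemma pure_supported: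
  assumes phi: "unit_vec (AB d) \<phi>"
    and hfix: "\<forall>x<d. \<forall>y<d. (\<Sum>a<d. \<Sum>b<d. cnj (W b x) * W y a * \<phi> (a, b)) = \<phi> (x, y)"
  shows "supported_on (AB d) (outer \<phi>) (symmetric_sub d W)"
proof -
  have Tphi: "op_apply (AB d) (swap_op d W) \<phi> p = \<phi> p" for p
  proof -
    obtain x y where p: "p = (x, y)" by (cases p)
    show ?thesis
    proof (cases "x < d \<and> y < d")
      case True
      have "op_apply (AB d) (swap_op d W) \<phi> (x, y) = (\<Sum>a<d. \<Sum>b<d. cnj (W b x) * W y a * \<phi> (a, b))"
        unfolding op_apply_def swap_op_def AB_def using True
        by (auto simp: sum.cartesian_product atLeast0LessThan case_prod_unfold intro!: sum.cong)
      then show ?thesis using hfix True p by simp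
    next
      case False
      then have "\<phi> (x, y) = 0" using phi unfolding Defs.unit_vec_def is_vec_def AB_def by auto
      moreover have "op_apply (AB d) (swap_op d W) \<phi> (x, y) = 0"
        unfolding op_apply_def swap_op_def AB_def using False by auto
      ultimately show ?thesis using p by simp
    qed
  qed
  show ?thesis unfolding supported_on_def symmetric_sub_def
  proof (intro allI impI ext)
    fix v :: "nat \<times> nat \<Rightarrow> complex" and x
    define c where "c = (\<Sum>y\<in>AB d. cnj (\<phi> y) * v y)"
    have "op_apply (AB d) (outer \<phi>) v = (\<lambda>x. \<phi> x * c)" unfolding outer_apply c_def ..
    moreover have "op_apply (AB d) (swap_op d W) (\<lambda>x. \<phi> x * c) x = op_apply (AB d) (swap_op d W) \<phi> x * c"
      unfolding op_apply_def by (simp add: sum_distrib_right mult.assoc)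
    ultimately show "op_apply (AB d) (swap_op d W) (op_apply (AB d) (outer \<phi>) v) x = op_apply (AB d) (outer \<phi>) v x"
      using Tphi by simp
  qed
qed

theorem mainTheorem3:
  shows "(\<forall>(d :: nat) (dR :: nat) (W :: nat \<Rightarrow> nat \<Rightarrow> complex) \<rho> \<psi>.
            0 < d \<longrightarrow> unitary_op {0..<d} W \<longrightarrow> density_op (AB d) \<rho> \<longrightarrow>
            (supported_on (AB d) \<rho> (symmetric_sub d W) \<or> supported_on (AB d) \<rho> (antisymmetric_sub d W)) \<longrightarrow>
            purification d dR \<rho> \<psi> \<longrightarrow>
            uncommon_info d dR W \<psi> = 0)
       \<and> (\<forall>(d :: nat) (\<phi> :: nat \<times> nat \<Rightarrow> complex).
            0 < d \<longrightarrow> unit_vec (AB d) \<phi> \<longrightarrow>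
            (\<exists>W. unitary_op {0..<d} W \<and>
               (\<forall>(dR :: nat) \<psi>. purification d dR (outer \<phi>) \<psi> \<longrightarrow> uncommon_info d dR W \<psi> = 0)))"
proof (intro conjI allI impI)
  fix d dR :: nat and W :: "nat \<Rightarrow> nat \<Rightarrow> complex" and \<rho> \<psi>
  assume sup: "supported_on (AB d) \<rho> (symmetric_sub d W) \<or> supported_on (AB d) \<rho> (antisymmetric_sub d W)"
    and pur: "purification d dR \<rho> \<psi>"
  show "uncommon_info d dR W \<psi> = 0"
  proof (cases "supported_on (AB d) \<rho> (symmetric_sub d W)")
    case True
    then have "supported_on (AB d) \<rho> (\<lambda>v. op_apply (AB d) (swap_op d W) v = (\<lambda>x. 1 * v x))"
      unfolding symmetric_sub_def by simp
    from swap_fixed[OF pur this] show ?thesis by (intro uncommon_zero[OF pur, of W 1]) auto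
  next
    case False
    with sup have "supported_on (AB d) \<rho> (\<lambda>v. op_apply (AB d) (swap_op d W) v = (\<lambda>x. (-1) * v x))"
      unfolding antisymmetric_sub_def by simp
    from swap_fixed[OF pur this] show ?thesis by (intro uncommon_zero[OF pur, of W "-1"]) auto
  qed
next
  fix d :: nat and \<phi> :: "nat \<times> nat \<Rightarrow> complex"
  assume phi: "unit_vec (AB d) \<phi>"
  obtain W where W: "unitary_op {0..<d} W"
    and hfix: "\<forall>x<d. \<forall>y<d. (\<Sum>a<d. \<Sum>b<d. cnj (W b x) * W y a * \<phi> (a, b)) = \<phi> (x, y)"
    using exists_W_fun by blast
  have sup: "supported_on (AB d) (outer \<phi>) (\<lambda>v. op_apply (AB d) (swap_op d W) v = (\<lambda>x. 1 * v x))"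
    using pure_supported[OF phi hfix] unfolding symmetric_sub_def by simp
  show "\<exists>W. unitary_op {0..<d} W \<and>
               (\<forall>(dR :: nat) \<psi>. purification d dR (outer \<phi>) \<psi> \<longrightarrow> uncommon_info d dR W \<psi> = 0)"
  proof (intro exI conjI allI impI)
    show "unitary_op {0..<d} W" by fact
    fix dR \<psi> assume pur: "purification d dR (outer \<phi>) \<psi>"
    from swap_fixed[OF pur sup] show "uncommon_info d dR W \<psi> = 0"
      by (intro uncommon_zero[OF pur, of W 1]) auto
  qed
qed


end
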